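(* Let $\mathcal{H}=(\mathbb{C}^3)^{\otimes 3}$, $E_3=\mathrm{diag}(1,-1,0)$, $\mathcal{L}oc=\{\, i(L\otimes \mathbf{1}\otimes \mathbf{1}+\mathbf{1}\otimes L\otimes \mathbf{1}+\mathbf{1}\otimes\mathbf{1}\otimes L) : L \text{ traceless Hermitian } 3\times 3\,\}$ and $H=E_3\otimes E_3\otimes \mathbf{1}+E_3\otimes \mathbf{1}\otimes E_3+\mathbf{1}\otimes E_3\otimes E_3$. Let $\mathcal{L}$ be the real Lie algebra generated by $\mathcal{L}oc$ and $iH$, and let $\mathrm{Sym}\subseteq\mathcal H$ be the $10$-dimensional symmetric subspace (vectors invariant under all permutations of the tensor factors), which is invariant under $\mathcal L$. Then for every traceless skew-Hermitian operator $X$ on $\mathrm{Sym}$ there exists $Y\in\mathcal{L}$ whose restriction to $\mathrm{Sym}$ equals $X$; i.e., $\mathcal L$ restricted to $\mathrm{Sym}$ contains all of $su(10)$. *)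

theory Defs
  imports "HOL-Analysis.Analysis"
begin

text \<open>The space (C^3)^{(x)3} is complex^(3 => 3): a basis vector is indexed by a
  function t assigning to each tensor position p (of type 3) a local basis index t p.
  Operators on it are complex^(3=>3)^(3=>3).\<close>

type_synonym op3 = "complex^3^3"
type_synonym vec27 = "complex^(3 \<Rightarrow> 3)"
type_synonym op27 = "complex^(3 \<Rightarrow> 3)^(3 \<Rightarrow> 3)"

definition adj :: "complex^'n^'n \<Rightarrow> complex^'n^'n" where
  "adj A = (\<chi> i j. cnj (A $ j $ i))"

definition csmul :: "complex \<Rightarrow> complex^'n^'m \<Rightarrow> complex^'n^'m" where
  "csmul c A = (\<chi> i j. c * A $ i $ j)"

definition kron3 :: "op3 \<Rightarrow> op3 \<Rightarrow> op3 \<Rightarrow> op27" where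
  "kron3 A B C = (\<chi> s t. A $ (s 0) $ (t 0) * B $ (s 1) $ (t 1) * C $ (s 2) $ (t 2))"

definition E3 :: op3 where
  "E3 = (\<chi> i j. if i = j then (if i = 0 then 1 else if i = 1 then -1 else 0) else 0)"

definition Loc :: "op27 set" where
  "Loc = {csmul \<i> (kron3 L (mat 1) (mat 1) + kron3 (mat 1) L (mat 1) + kron3 (mat 1) (mat 1) L)
          | L. adj L = L \<and> trace L = 0}"

definition Hint :: op27 where
  "Hint = kron3 E3 E3 (mat 1) + kron3 E3 (mat 1) E3 + kron3 (mat 1) E3 E3"

inductive_set lie_gen :: "(complex^'n^'n) set \<Rightarrow> (complex^'n^'n) set" for G where
  gen: "X \<in> G \<Longrightarrow> X \<in> lie_gen G"
| zero: "0 \<in> lie_gen G"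
| add: "X \<in> lie_gen G \<Longrightarrow> Y \<in> lie_gen G \<Longrightarrow> X + Y \<in> lie_gen G"
| scale: "X \<in> lie_gen G \<Longrightarrow> csmul (complex_of_real r) X \<in> lie_gen G"
| bracket: "X \<in> lie_gen G \<Longrightarrow> Y \<in> lie_gen G \<Longrightarrow> X ** Y - Y ** X \<in> lie_gen G"

definition Lie :: "op27 set" where
  "Lie = lie_gen (Loc \<union> {csmul \<i> Hint})"

definition Sym :: "vec27 set" where
  "Sym = {v. \<forall>\<sigma>. \<sigma> permutes (UNIV :: 3 set) \<longrightarrow> (\<forall>t. v $ (t \<circ> \<sigma>) = v $ t)}"

definition cinner :: "complex^'n \<Rightarrow> complex^'n \<Rightarrow> complex" where
  "cinner v w = (\<Sum>i\<in>UNIV. cnj (v $ i) * w $ i)"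

end

theory Submission
  imports Defs
begin

lemma ex3: "(x::3) = 0 \<or> x = 1 \<or> x = 2"
proof (induct x)
  case (of_int z)
  then have "z = 0 \<or> z = 1 \<or> z = 2" by fastforce
  then show ?case by auto
qed

lemma all3: "(\<forall>x::3. P x) \<longleftrightarrow> P 0 \<and> P 1 \<and> P 2"
  using ex3 by metis

lemma UNIV3: "(UNIV::3 set) = {0,1,2}" using ex3 by auto

lemma sum3: "sum f (UNIV::3 set) = f 0 + f 1 + f 2"
  unfolding UNIV3 by (simp add: ac_simps)

definition mk :: "3 \<Rightarrow> 3 \<Rightarrow> 3 \<Rightarrow> (3 \<Rightarrow> 3)" where
  "mk a b c = (\<lambda>p. if p = 0 then a else if p = 1 then b else c)"

lemma mk_app[simp]: "mk a b c 0 = a" "mk a b c 1 = b" "mk a b c 2 = c"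
  by (simp_all add: mk_def)

lemma mk_eta: "mk (t 0) (t 1) (t 2) = t"
proof
  fix p show "mk (t 0) (t 1) (t 2) p = t p" using ex3[of p] by auto
qed

lemma mk_eq[simp]: "mk a b c = mk a' b' c' \<longleftrightarrow> a = a' \<and> b = b' \<and> c = c'"
  by (metis mk_app)

lemma comp_mk[simp]: "f \<circ> mk a b c = mk (f a) (f b) (f c)"
proof
  fix p show "(f \<circ> mk a b c) p = mk (f a) (f b) (f c) p" using ex3[of p] by auto
qed

lemma sum27: "sum f (UNIV::(3\<Rightarrow>3) set) = (\<Sum>a\<in>UNIV. \<Sum>b\<in>UNIV. \<Sum>c\<in>UNIV. f (mk a b c))"
proof -
  have bij: "bij_betw (\<lambda>(a,b,c). mk a b c) UNIV (UNIV::(3\<Rightarrow>3) set)"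
    by (rule bij_betw_byWitness[where f'="\<lambda>t. (t 0, t 1, t 2)"]) (auto simp: mk_eta)
  have "sum f (UNIV::(3\<Rightarrow>3) set) = sum (f \<circ> (\<lambda>(a,b,c). mk a b c)) UNIV"
    using sum.reindex_bij_betw[OF bij, of f] by simp
  also have "\<dots> = sum (f \<circ> (\<lambda>(a,b,c). mk a b c)) (UNIV \<times> (UNIV \<times> UNIV))"
    by simp
  also have "\<dots> = (\<Sum>a\<in>UNIV. \<Sum>b\<in>UNIV. \<Sum>c\<in>UNIV. f (mk a b c))"
    unfolding sum.cartesian_product' by simp
  finally show ?thesis .
qed

datatype st = S300 | S210 | S201 | S120 | S111 | S102 | S030 | S021 | S012 | S003

lemma UNIV_st: "(UNIV::st set) = {S300, S210, S201, S120, S111, S102, S030, S021, S012, S003}"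
proof -
  have "x \<in> {S300, S210, S201, S120, S111, S102, S030, S021, S012, S003}" for x by (cases x) auto
  then show ?thesis by auto
qed

instance st :: finite
  by standard (simp add: UNIV_st)

definition cnt :: "3 \<Rightarrow> (3 \<Rightarrow> 3) \<Rightarrow> nat" where
  "cnt j t = (\<Sum>p\<in>UNIV. if t p = j then 1 else 0)"

definition st_of :: "nat \<Rightarrow> nat \<Rightarrow> st" where
  "st_of n0 n1 = (if n0 = 3 then S300 else if n0 = 2 \<and> n1 = 1 then S210 else if n0 = 2 then S201
     else if n0 = 1 \<and> n1 = 2 then S120 else if n0 = 1 \<and> n1 = 1 then S111 else if n0 = 1 then S102
     else if n1 = 3 then S030 else if n1 = 2 then S021 else if n1 = 1 then S012 else S003)"

definition tau :: "(3 \<Rightarrow> 3) \<Rightarrow> st" where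
  "tau t = st_of (cnt 0 t) (cnt 1 t)"

lemma tau_mk: "tau (mk a b c) = st_of ((if a = 0 then 1 else 0) + (if b = 0 then 1 else 0) + (if c = 0 then 1 else 0))
   ((if a = 1 then 1 else 0) + (if b = 1 then 1 else 0) + (if c = 1 then 1 else 0))"
  by (simp add: tau_def cnt_def sum3)

primrec rep :: "st \<Rightarrow> (3 \<Rightarrow> 3)" where
  "rep S300 = mk 0 0 0" | "rep S210 = mk 0 0 1" | "rep S201 = mk 0 0 2" | "rep S120 = mk 0 1 1"
| "rep S111 = mk 0 1 2" | "rep S102 = mk 0 2 2" | "rep S030 = mk 1 1 1" | "rep S021 = mk 1 1 2"
| "rep S012 = mk 1 2 2" | "rep S003 = mk 2 2 2"

lemma tau_rep[simp]: "tau (rep a) = a"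
  by (cases a) (simp_all add: tau_mk st_of_def)

lemma cnt_perm: "\<sigma> permutes (UNIV::3 set) \<Longrightarrow> cnt j (t \<circ> \<sigma>) = cnt j t"
  unfolding cnt_def using sum.permute[of \<sigma> UNIV "\<lambda>p. if t p = j then 1 else (0::nat)"]
  by (simp add: o_def)

lemma tau_perm: "\<sigma> permutes (UNIV::3 set) \<Longrightarrow> tau (t \<circ> \<sigma>) = tau t"
  by (simp add: tau_def cnt_perm)

definition P6 :: "(3 \<Rightarrow> 3) list" where
  "P6 = [mk 0 1 2, mk 1 0 2, mk 2 1 0, mk 0 2 1, mk 1 2 0, mk 2 0 1]"

lemma inj_mk: "a \<noteq> b \<Longrightarrow> a \<noteq> c \<Longrightarrow> b \<noteq> c \<Longrightarrow> inj (mk a b c)"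
  unfolding inj_def
proof (intro allI impI)
  fix x y assume "a \<noteq> b" "a \<noteq> c" "b \<noteq> c" "mk a b c x = mk a b c y"
  then show "x = y" using ex3[of x] ex3[of y] by auto
qed

lemma P6_permutes: "\<sigma> \<in> set P6 \<Longrightarrow> \<sigma> permutes (UNIV::3 set)"
proof -
  assume "\<sigma> \<in> set P6"
  then have "inj \<sigma>" unfolding P6_def
    by (simp only: set_simps insert_iff empty_iff) (elim disjE FalseE; simp only:; rule inj_mk; simp)
  then have "bij \<sigma>" using finite_UNIV_inj_surj[of \<sigma>] by (simp add: bij_def)
  then show ?thesis by (intro bij_imp_permutes) auto
qed

lemma mk_P6_all: "\<forall>a b c. a \<noteq> b \<longrightarrow> a \<noteq> c \<longrightarrow> b \<noteq> c \<longrightarrow> mk a b c \<in> set P6"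
  by (simp only: all3) (simp add: P6_def)

lemma mk_P6: "a \<noteq> b \<Longrightarrow> a \<noteq> c \<Longrightarrow> b \<noteq> c \<Longrightarrow> mk a b c \<in> set P6"
  using mk_P6_all by blast

lemma perm_cases: "\<sigma> permutes (UNIV::3 set) \<Longrightarrow> \<sigma> \<in> set P6"
proof -
  assume p: "\<sigma> permutes (UNIV::3 set)"
  then have inj: "inj \<sigma>" by (rule permutes_inj)
  have ne: "\<sigma> 0 \<noteq> \<sigma> 1" "\<sigma> 0 \<noteq> \<sigma> 2" "\<sigma> 1 \<noteq> \<sigma> 2"
    by (simp_all add: inj_eq[OF inj])
  have "mk (\<sigma> 0) (\<sigma> 1) (\<sigma> 2) \<in> set P6"
    using ne by (rule mk_P6)
  then show ?thesis by (simp add: mk_eta)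
qed

lemma orbit_wit: "\<exists>\<sigma>\<in>set P6. t = rep (tau t) \<circ> \<sigma>"
proof -
  have "\<forall>a b c. \<exists>\<sigma>\<in>set P6. mk a b c = rep (tau (mk a b c)) \<circ> \<sigma>"
    by (simp only: all3) (simp add: P6_def tau_mk st_of_def)
  then have "\<exists>\<sigma>\<in>set P6. mk a b c = rep (tau (mk a b c)) \<circ> \<sigma>" for a b c by blast
  from this[of "t 0" "t 1" "t 2"] show ?thesis by (simp add: mk_eta)
qed


definition u :: "st \<Rightarrow> vec27" where "u b = (\<chi> t. if tau t = b then 1 else 0)"

lemma u_Sym: "u b \<in> Sym"
  by (simp add: Sym_def u_def tau_perm)

lemma Sym_rep: "v \<in> Sym \<Longrightarrow> v $ t = v $ rep (tau t)"
proof -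
  assume v: "v \<in> Sym"
  define r where "r = rep (tau t)"
  obtain \<sigma> where s: "\<sigma> \<in> set P6" "t = r \<circ> \<sigma>" using orbit_wit[of t] unfolding r_def by blast
  have "\<sigma> permutes UNIV" using s(1) by (rule P6_permutes)
  then have "v $ (r \<circ> \<sigma>) = v $ r" using v by (simp add: Sym_def)
  then show ?thesis using s(2) unfolding r_def[symmetric] by simp
qed

lemma Sym_decomp: "v \<in> Sym \<Longrightarrow> v = (\<Sum>a\<in>UNIV. v $ rep a *s u a)"
proof -
  assume v: "v \<in> Sym"
  show ?thesis
  proof (rule vec_eq_iff[THEN iffD2], rule allI)
    fix t
    have "(\<Sum>a\<in>UNIV. v $ rep a *s u a) $ t = (\<Sum>a\<in>UNIV. v $ rep a * (if tau t = a then 1 else 0))"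
      by (simp add: u_def)
    also have "\<dots> = v $ rep (tau t)"
      by (simp add: if_distrib cong: if_cong)
    finally show "v $ t = (\<Sum>a\<in>UNIV. v $ rep a *s u a) $ t" using Sym_rep[OF v, of t] by simp
  qed
qed

definition Inv :: "op27 \<Rightarrow> bool" where
  "Inv Y = (\<forall>\<sigma>. \<sigma> permutes (UNIV::3 set) \<longrightarrow> (\<forall>s t. Y $ (s \<circ> \<sigma>) $ (t \<circ> \<sigma>) = Y $ s $ t))"

lemma reindex27:
  fixes f :: "(3 \<Rightarrow> 3) \<Rightarrow> 'a::comm_monoid_add"
  assumes "\<sigma> permutes (UNIV::3 set)"
  shows "(\<Sum>r\<in>UNIV. f r) = (\<Sum>r\<in>UNIV. f (r \<circ> \<sigma>))"
proof (rule sum.reindex_bij_witness[where j="\<lambda>r. r \<circ> inv \<sigma>" and i="\<lambda>r. r \<circ> \<sigma>"])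
  have a: "inv \<sigma> \<circ> \<sigma> = id" "\<sigma> \<circ> inv \<sigma> = id" using permutes_inv_o[OF assms] by auto
  fix r :: "3 \<Rightarrow> 3"
  show "r \<circ> inv \<sigma> \<circ> \<sigma> = r" using a by (simp add: o_assoc[symmetric])
  show "r \<circ> \<sigma> \<circ> inv \<sigma> = r" using a by (simp add: o_assoc[symmetric])
  show "f (r \<circ> inv \<sigma> \<circ> \<sigma>) = f r" using a by (simp add: o_assoc[symmetric])
qed auto

lemma Inv_Sym: "Inv Y \<Longrightarrow> v \<in> Sym \<Longrightarrow> Y *v v \<in> Sym"
proof -
  assume Y: "Inv Y" and v: "v \<in> Sym"
  show ?thesis unfolding Sym_def
  proof (intro CollectI allI impI)
    fix \<sigma> :: "3 \<Rightarrow> 3" and t assume p: "\<sigma> permutes UNIV"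
    have "(Y *v v) $ (t \<circ> \<sigma>) = (\<Sum>r\<in>UNIV. Y $ (t \<circ> \<sigma>) $ r * v $ r)"
      by (simp add: matrix_vector_mult_def)
    also have "\<dots> = (\<Sum>r\<in>UNIV. Y $ (t \<circ> \<sigma>) $ (r \<circ> \<sigma>) * v $ (r \<circ> \<sigma>))"
      by (rule reindex27[OF p])
    also have "\<dots> = (\<Sum>r\<in>UNIV. Y $ t $ r * v $ r)"
      using Y v p by (simp add: Inv_def Sym_def)
    also have "\<dots> = (Y *v v) $ t" by (simp add: matrix_vector_mult_def)
    finally show "(Y *v v) $ (t \<circ> \<sigma>) = (Y *v v) $ t" .
  qed
qed

lemma Inv_mult: "Inv A \<Longrightarrow> Inv B \<Longrightarrow> Inv (A ** B)"
  unfolding Inv_def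
proof (intro allI impI)
  fix \<sigma> :: "3 \<Rightarrow> 3" and s t
  assume A: "\<forall>\<sigma>. \<sigma> permutes UNIV \<longrightarrow> (\<forall>s t. A $ (s \<circ> \<sigma>) $ (t \<circ> \<sigma>) = A $ s $ t)"
    and B: "\<forall>\<sigma>. \<sigma> permutes UNIV \<longrightarrow> (\<forall>s t. B $ (s \<circ> \<sigma>) $ (t \<circ> \<sigma>) = B $ s $ t)"
    and p: "\<sigma> permutes UNIV"
  have "(A ** B) $ (s \<circ> \<sigma>) $ (t \<circ> \<sigma>) = (\<Sum>r\<in>UNIV. A $ (s \<circ> \<sigma>) $ r * B $ r $ (t \<circ> \<sigma>))"
    by (simp add: matrix_matrix_mult_def)
  also have "\<dots> = (\<Sum>r\<in>UNIV. A $ (s \<circ> \<sigma>) $ (r \<circ> \<sigma>) * B $ (r \<circ> \<sigma>) $ (t \<circ> \<sigma>))"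
    by (rule reindex27[OF p])
  also have "\<dots> = (A ** B) $ s $ t"
    using A B p by (simp add: matrix_matrix_mult_def)
  finally show "(A ** B) $ (s \<circ> \<sigma>) $ (t \<circ> \<sigma>) = (A ** B) $ s $ t" .
qed

lemma Inv_add: "Inv A \<Longrightarrow> Inv B \<Longrightarrow> Inv (A + B)"
  by (simp add: Inv_def)

lemma Inv_diff: "Inv A \<Longrightarrow> Inv B \<Longrightarrow> Inv (A - B)"
  by (simp add: Inv_def)

lemma Inv_zero: "Inv 0"
  by (simp add: Inv_def)

lemma Inv_csmul: "Inv A \<Longrightarrow> Inv (csmul c A)"
  by (simp add: Inv_def csmul_def)

lemma Inv_sym1: "Inv (kron3 A B B + kron3 B A B + kron3 B B A)"
  unfolding Inv_def
proof (intro allI impI)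
  fix \<sigma> :: "3 \<Rightarrow> 3" and s t :: "3 \<Rightarrow> 3"
  assume "\<sigma> permutes UNIV"
  then have "\<sigma> \<in> set P6" by (rule perm_cases)
  then show "(kron3 A B B + kron3 B A B + kron3 B B A) $ (s \<circ> \<sigma>) $ (t \<circ> \<sigma>) =
             (kron3 A B B + kron3 B A B + kron3 B B A) $ s $ t"
    unfolding P6_def by (auto simp: kron3_def ac_simps)
qed

lemma Inv_sym2: "Inv (kron3 A A B + kron3 A B A + kron3 B A A)"
  unfolding Inv_def
proof (intro allI impI)
  fix \<sigma> :: "3 \<Rightarrow> 3" and s t :: "3 \<Rightarrow> 3"
  assume "\<sigma> permutes UNIV"
  then have "\<sigma> \<in> set P6" by (rule perm_cases)
  then show "(kron3 A A B + kron3 A B A + kron3 B A A) $ (s \<circ> \<sigma>) $ (t \<circ> \<sigma>) =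
             (kron3 A A B + kron3 A B A + kron3 B A A) $ s $ t"
    unfolding P6_def by (auto simp: kron3_def ac_simps)
qed

lemma Lie_Inv: "X \<in> Lie \<Longrightarrow> Inv X"
  unfolding Lie_def
proof (induction rule: lie_gen.induct)
  case (gen X)
  then show ?case
  proof
    assume "X \<in> Loc"
    then show ?thesis unfolding Loc_def using Inv_csmul Inv_sym1 by auto
  next
    assume "X \<in> {csmul \<i> Hint}"
    then show ?thesis unfolding Hint_def using Inv_csmul Inv_sym2 by auto
  qed
next
  case zero then show ?case by (rule Inv_zero)
next
  case (add X Y) then show ?case by (simp add: Inv_add)
next
  case (scale X r) then show ?case by (simp add: Inv_csmul)
next
  case (bracket X Y) then show ?case by (simp add: Inv_diff Inv_mult)
qed

definition M :: "op27 \<Rightarrow> st \<Rightarrow> st \<Rightarrow> complex" where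
  "M Y a b = (Y *v u b) $ rep a"

lemma if01: "(x::'a::semiring_1) * (if P then 1 else 0) = (if P then x else 0)"
  "(if P then x else 0) * (y::'a) = (if P then x * y else 0)"
  by auto

lemma M_hom: "Inv Z \<Longrightarrow> M (Y ** Z) a b = (\<Sum>c\<in>UNIV. M Y a c * M Z c b)"
proof -
  assume Z: "Inv Z"
  define w where "w = Z *v u b"
  have wS: "w \<in> Sym" unfolding w_def by (rule Inv_Sym[OF Z u_Sym])
  have wr: "w $ r = M Z (tau r) b" for r
    using Sym_rep[OF wS, of r] by (simp add: M_def w_def)
  have "M (Y ** Z) a b = (Y *v w) $ rep a"
    by (simp add: M_def w_def matrix_vector_mul_assoc)
  also have "\<dots> = (\<Sum>r\<in>UNIV. Y $ rep a $ r * M Z (tau r) b)"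
    by (simp add: matrix_vector_mult_def wr)
  also have "\<dots> = (\<Sum>r\<in>UNIV. \<Sum>c\<in>UNIV. if tau r = c then Y $ rep a $ r * M Z c b else 0)"
    by (simp add: sum.delta')
  also have "\<dots> = (\<Sum>c\<in>UNIV. \<Sum>r\<in>UNIV. if tau r = c then Y $ rep a $ r * M Z c b else 0)"
    by (rule sum.swap)
  also have "\<dots> = (\<Sum>c\<in>UNIV. M Y a c * M Z c b)"
    by (simp add: M_def[of Y] u_def matrix_vector_mult_def sum_distrib_right if01)
  finally show ?thesis .
qed

lemma M_add: "M (A + B) a b = M A a b + M B a b"
  by (simp add: M_def matrix_vector_mult_def sum.distrib distrib_right)

lemma M_diff: "M (A - B) a b = M A a b - M B a b"
  by (simp add: M_def matrix_vector_mult_def sum_subtractf left_diff_distrib)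

lemma M_csmul: "M (csmul c A) a b = c * M A a b"
  by (simp add: M_def matrix_vector_mult_def csmul_def sum_distrib_left mult.assoc)


primrec orb :: "st \<Rightarrow> (3 \<Rightarrow> 3) list" where
  "orb S300 = [mk 0 0 0]"
| "orb S210 = [mk 0 0 1, mk 0 1 0, mk 1 0 0]"
| "orb S201 = [mk 0 0 2, mk 0 2 0, mk 2 0 0]"
| "orb S120 = [mk 0 1 1, mk 1 0 1, mk 1 1 0]"
| "orb S111 = [mk 0 1 2, mk 0 2 1, mk 1 0 2, mk 1 2 0, mk 2 0 1, mk 2 1 0]"
| "orb S102 = [mk 0 2 2, mk 2 0 2, mk 2 2 0]"
| "orb S030 = [mk 1 1 1]"
| "orb S021 = [mk 1 1 2, mk 1 2 1, mk 2 1 1]"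
| "orb S012 = [mk 1 2 2, mk 2 1 2, mk 2 2 1]"
| "orb S003 = [mk 2 2 2]"

lemma sum_tau: "(\<Sum>t\<in>UNIV. if tau t = b then f t else 0) = sum_list (map f (orb b))"
  by (cases b) (simp_all add: sum27 sum3 tau_mk st_of_def ac_simps)

lemma M_orb: "M Y a b = sum_list (map (\<lambda>t. Y $ rep a $ t) (orb b))"
  by (simp add: M_def matrix_vector_mult_def u_def if01 sum_tau[symmetric])

definition tbl :: "(st \<times> st \<times> complex) list \<Rightarrow> st \<Rightarrow> st \<Rightarrow> complex" where
  "tbl xs a b = sum_list (map (\<lambda>(x,y,c). if x = a \<and> y = b then c else 0) xs)"

definition Cl :: "op3 \<Rightarrow> op27" where
  "Cl L = kron3 L (mat 1) (mat 1) + kron3 (mat 1) L (mat 1) + kron3 (mat 1) (mat 1) L"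

definition Lc :: "op3 \<Rightarrow> op27" where "Lc L = csmul \<i> (Cl L)"

lemma Lc_Lie: "adj L = L \<Longrightarrow> trace L = 0 \<Longrightarrow> Lc L \<in> Lie"
  unfolding Lie_def Lc_def Cl_def by (rule lie_gen.gen) (auto simp: Loc_def)

lemma Hint_Lie: "csmul \<i> Hint \<in> Lie"
  unfolding Lie_def by (rule lie_gen.gen) auto

definition L01 :: op3 where "L01 = (\<chi> i j. if i = 0 \<and> j = 1 then \<i> else if i = 1 \<and> j = 0 then - \<i> else 0)"


type_synonym m10 = "st \<Rightarrow> st \<Rightarrow> complex"

definition mm :: "m10 \<Rightarrow> m10 \<Rightarrow> m10" where "mm F G = (\<lambda>a b. \<Sum>c\<in>UNIV. F a c * G c b)"
definition br :: "m10 \<Rightarrow> m10 \<Rightarrow> m10" where "br F G = (\<lambda>a b. mm F G a b - mm G F a b)"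
definition rs :: "real \<Rightarrow> m10 \<Rightarrow> m10" where "rs r F = (\<lambda>a b. complex_of_real r * F a b)"
definition pl :: "m10 \<Rightarrow> m10 \<Rightarrow> m10" where "pl F G = (\<lambda>a b. F a b + G a b)"
definition SS :: "m10 set" where "SS = M ` Lie"

lemma SS_pl: "F \<in> SS \<Longrightarrow> G \<in> SS \<Longrightarrow> pl F G \<in> SS"
proof -
  assume "F \<in> SS" "G \<in> SS"
  then obtain X Y where XY: "X \<in> Lie" "Y \<in> Lie" "F = M X" "G = M Y" unfolding SS_def by auto
  have "pl F G = M (X + Y)" using XY by (simp add: pl_def M_add fun_eq_iff)
  moreover have "X + Y \<in> Lie" using XY(1,2) unfolding Lie_def by (rule lie_gen.add)
  ultimately show ?thesis unfolding SS_def by auto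
qed

lemma SS_rs: "F \<in> SS \<Longrightarrow> rs r F \<in> SS"
proof -
  assume "F \<in> SS"
  then obtain X where X: "X \<in> Lie" "F = M X" unfolding SS_def by auto
  have "rs r F = M (csmul (complex_of_real r) X)" using X by (simp add: rs_def M_csmul fun_eq_iff)
  moreover have "csmul (complex_of_real r) X \<in> Lie" using X(1) unfolding Lie_def by (rule lie_gen.scale)
  ultimately show ?thesis unfolding SS_def by auto
qed

lemma SS_br: "F \<in> SS \<Longrightarrow> G \<in> SS \<Longrightarrow> br F G \<in> SS"
proof -
  assume "F \<in> SS" "G \<in> SS"
  then obtain X Y where XY: "X \<in> Lie" "Y \<in> Lie" "F = M X" "G = M Y" unfolding SS_def by auto
  have "br F G = M (X ** Y - Y ** X)"
    using XY Lie_Inv[OF XY(1)] Lie_Inv[OF XY(2)] by (simp add: br_def mm_def M_diff M_hom fun_eq_iff)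
  moreover have "X ** Y - Y ** X \<in> Lie" using XY(1,2) unfolding Lie_def by (rule lie_gen.bracket)
  ultimately show ?thesis unfolding SS_def by auto
qed

lemma SS_zero: "(\<lambda>a b. 0) \<in> SS"
proof -
  have "M 0 = (\<lambda>a b. 0)" by (simp add: M_def fun_eq_iff matrix_vector_mult_def)
  moreover have "(0::op27) \<in> Lie" unfolding Lie_def by (rule lie_gen.zero)
  ultimately show ?thesis unfolding SS_def by force
qed

lemma SS_sum: "finite I \<Longrightarrow> (\<forall>k\<in>I. F k \<in> SS) \<Longrightarrow> (\<lambda>a b. \<Sum>k\<in>I. F k a b) \<in> SS"
proof (induction I rule: finite_induct)
  case empty then show ?case using SS_zero by simp
next
  case (insert k I)
  then have "pl (F k) (\<lambda>a b. \<Sum>k\<in>I. F k a b) \<in> SS" by (intro SS_pl) auto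
  then show ?case using insert by (simp add: pl_def)
qed

lemma SS_scale_inv: "rs c F \<in> SS \<Longrightarrow> c \<noteq> 0 \<Longrightarrow> F \<in> SS"
proof -
  assume h: "rs c F \<in> SS" "c \<noteq> 0"
  from h(1) have "rs (1/c) (rs c F) \<in> SS" by (rule SS_rs)
  moreover have "rs (1/c) (rs c F) = F" using \<open>c \<noteq> 0\<close>
    by (simp add: rs_def fun_eq_iff mult.assoc[symmetric] of_real_mult[symmetric])
  ultimately show ?thesis by simp
qed

primrec m :: "st \<Rightarrow> real" where
  "m S300 = 1" | "m S210 = 3" | "m S201 = 3" | "m S120 = 3" | "m S111 = 6"
| "m S102 = 3" | "m S030 = 1" | "m S021 = 3" | "m S012 = 3" | "m S003 = 1"

lemma m_pos: "m a > 0" by (cases a) auto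

definition A :: "st \<Rightarrow> st \<Rightarrow> m10" where
  "A x y = (\<lambda>i j. (if i = x \<and> j = y then complex_of_real (m y) else 0) - (if i = y \<and> j = x then complex_of_real (m x) else 0))"
definition B :: "st \<Rightarrow> st \<Rightarrow> m10" where
  "B x y = (\<lambda>i j. \<i> * ((if i = x \<and> j = y then complex_of_real (m y) else 0) + (if i = y \<and> j = x then complex_of_real (m x) else 0)))"
definition D :: "st \<Rightarrow> st \<Rightarrow> m10" where
  "D x y = (\<lambda>i j. \<i> * ((if i = x \<and> j = x then 1 else 0) - (if i = y \<and> j = y then 1 else 0)))"

lemma sum_delta_st: "(\<Sum>k\<in>(UNIV::st set). if k = b then g k else 0) = g b"
  by simp

lemma sdl: "(\<Sum>k\<in>UNIV. (if i = a \<and> k = (b::st) then p else 0) * (f k::complex)) = (if i = a then p * f b else 0)" (is "_ = ?r")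
proof -
  have "(\<Sum>k\<in>UNIV. (if i = a \<and> k = b then p else 0) * f k) = (\<Sum>k\<in>UNIV. if k = b then (if i = a then p * f k else 0) else 0)"
    by (rule sum.cong) auto
  also have "\<dots> = ?r" by (rule sum_delta_st)
  finally show ?thesis .
qed

lemma sdr: "(\<Sum>k\<in>UNIV. (f k::complex) * (if k = (a::st) \<and> j = b then p else 0)) = (if j = b then f a * p else 0)" (is "_ = ?r")
proof -
  have "(\<Sum>k\<in>UNIV. f k * (if k = a \<and> j = b then p else 0)) = (\<Sum>k\<in>UNIV. if k = a then (if j = b then f k * p else 0) else 0)"
    by (rule sum.cong) auto
  also have "\<dots> = ?r" by (rule sum_delta_st)
  finally show ?thesis .
qed

lemma mmA_l: fixes G :: m10 shows "mm (A x y) G i j = (if i = x then complex_of_real (m y) * G y j else 0) - (if i = y then complex_of_real (m x) * G x j else 0)"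
  by (simp add: mm_def A_def left_diff_distrib sum_subtractf sdl)
lemma mmA_r: fixes G :: m10 shows "mm G (A x y) i j = (if j = y then G i x * m y else 0) - (if j = x then G i y * m x else 0)"
  by (simp add: mm_def A_def right_diff_distrib sum_subtractf sdr)
lemma mmB_l: fixes G :: m10 shows "mm (B x y) G i j = \<i> * ((if i = x then complex_of_real (m y) * G y j else 0) + (if i = y then complex_of_real (m x) * G x j else 0))"
  by (simp add: mm_def B_def distrib_right sum.distrib sdl mult.assoc sum_distrib_left[symmetric])
lemma mmB_r: fixes G :: m10 shows "mm G (B x y) i j = \<i> * ((if j = y then G i x * m y else 0) + (if j = x then G i y * m x else 0))"
  by (simp add: mm_def B_def distrib_left sum.distrib sdr mult.assoc mult.left_commute[of _ \<i>] sum_distrib_left[symmetric])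
lemma mmD_l: fixes G :: m10 shows "mm (D x y) G i j = \<i> * ((if i = x then G x j else 0) - (if i = y then G y j else 0))"
  by (simp add: mm_def D_def left_diff_distrib sum_subtractf sdl mult.assoc sum_distrib_left[symmetric] right_diff_distrib)
lemma mmD_r: fixes G :: m10 shows "mm G (D x y) i j = \<i> * ((if j = x then G i x else 0) - (if j = y then G i y else 0))"
  by (simp add: mm_def D_def right_diff_distrib sum_subtractf sdr mult.left_commute[of _ \<i>] sum_distrib_left[symmetric])

lemma L1: "x \<noteq> y \<Longrightarrow> y \<noteq> z \<Longrightarrow> x \<noteq> z \<Longrightarrow> br (A x y) (A y z) = rs (m y) (A x z)"
  by (simp add: fun_eq_iff br_def mmA_l rs_def) (auto simp: A_def)

lemma L2: "x \<noteq> y \<Longrightarrow> br (A x y) (B x y) = rs (2 * m x * m y) (D x y)"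
  by (simp add: fun_eq_iff br_def mmA_l mmB_l rs_def) (auto simp: A_def B_def D_def)

lemma L3: "x \<noteq> y \<Longrightarrow> y \<noteq> z \<Longrightarrow> x \<noteq> z \<Longrightarrow> br (D x y) (A y z) = rs (-1) (B y z)"
  by (simp add: fun_eq_iff br_def mmD_l mmA_l rs_def) (auto simp: A_def B_def D_def)

lemma A_swap: "A y x = rs (-1) (A x y)"
  by (auto simp: fun_eq_iff rs_def A_def)

lemma B_swap: "B y x = B x y"
  by (auto simp: fun_eq_iff B_def)

definition L02 :: op3 where "L02 = (\<chi> i j. if i = 0 \<and> j = 2 then \<i> else if i = 2 \<and> j = 0 then - \<i> else 0)"
definition L12 :: op3 where "L12 = (\<chi> i j. if i = 1 \<and> j = 2 then \<i> else if i = 2 \<and> j = 1 then - \<i> else 0)"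

primrec hh :: "st \<Rightarrow> real" where
  "hh S300 = 3" | "hh S210 = -1" | "hh S201 = 1" | "hh S120 = -1" | "hh S111 = -1"
| "hh S102 = 0" | "hh S030 = 3" | "hh S021 = 1" | "hh S012 = 0" | "hh S003 = 0"

primrec l1 :: "st \<Rightarrow> real" where
  "l1 S300 = 3" | "l1 S210 = 1" | "l1 S201 = 2" | "l1 S120 = -1" | "l1 S111 = 0"
| "l1 S102 = 1" | "l1 S030 = -3" | "l1 S021 = -2" | "l1 S012 = -1" | "l1 S003 = 0"

definition dg :: "(st \<Rightarrow> real) \<Rightarrow> m10" where
  "dg f = (\<lambda>a b. if a = b then \<i> * complex_of_real (f a) else 0)"

lemma ii[simp]: "\<i> * (x * \<i>) = - x" "\<i> * (\<i> * x) = - x"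
  by (simp_all add: mult.commute[of x \<i>])

lemma mult_if0: "(x::complex) * (if P then y else 0) = (if P then x * y else 0)"
  by auto

lemma br_dg: "br (dg f) G = (\<lambda>a b. \<i> * complex_of_real (f a - f b) * G a b)"
proof (rule ext)+
  fix a b
  have l: "mm (dg f) G a b = \<i> * complex_of_real (f a) * G a b"
    by (simp add: mm_def dg_def if01)
  have r: "mm G (dg f) a b = G a b * (\<i> * complex_of_real (f b))"
    by (simp add: mm_def dg_def mult_if0)
  show "br (dg f) G a b = \<i> * complex_of_real (f a - f b) * G a b"
    by (simp add: br_def l r algebra_simps)
qed

lemma M_E3: "M (Lc E3) = dg l1"
  apply (rule ext)+
  subgoal for a b
    by (cases a; cases b) (simp_all add: M_orb Lc_def Cl_def csmul_def kron3_def E3_def dg_def mat_def)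
  done

lemma M_H: "M (csmul \<i> Hint) = dg hh"
  apply (rule ext)+
  subgoal for a b
    by (cases a; cases b) (simp_all add: M_orb Hint_def csmul_def kron3_def E3_def dg_def mat_def)
  done

lemma dg_l1_SS: "dg l1 \<in> SS"
proof -
  have "adj E3 = E3" by (simp add: adj_def E3_def vec_eq_iff all3)
  moreover have "trace E3 = 0" by (simp add: trace_def E3_def sum3)
  ultimately have "Lc E3 \<in> Lie" by (rule Lc_Lie)
  then show ?thesis unfolding SS_def M_E3[symmetric] by blast
qed

lemma dg_hh_SS: "dg hh \<in> SS"
  unfolding SS_def M_H[symmetric] using Hint_Lie by blast

definition fac :: "real \<Rightarrow> real \<Rightarrow> st \<Rightarrow> real" where
  "fac al be = (\<lambda>a. al * hh a + be * l1 a)"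

lemma dg_fac_SS: "dg (fac al be) \<in> SS"
proof -
  have "pl (rs al (dg hh)) (rs be (dg l1)) \<in> SS"
    by (intro SS_pl SS_rs dg_hh_SS dg_l1_SS)
  moreover have "pl (rs al (dg hh)) (rs be (dg l1)) = dg (fac al be)"
    by (auto simp: fun_eq_iff pl_def rs_def dg_def fac_def algebra_simps)
  ultimately show ?thesis by simp
qed

definition K01 :: m10 where "K01 = tbl [(S300, S210, (-3)), (S210, S300, (1)), (S210, S120, (-2)), (S201, S111, (-2)), (S120, S210, (2)), (S120, S030, (-1)), (S111, S201, (1)), (S111, S021, (-1)), (S102, S012, (-1)), (S030, S120, (3)), (S021, S111, (2)), (S012, S102, (1))]"

lemma M_L01: "M (Lc L01) = K01"
  unfolding K01_def
  apply (rule ext)+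
  subgoal for a b
    by (cases a; cases b) (simp_all add: M_orb Lc_def Cl_def csmul_def kron3_def L01_def tbl_def mat_def)
  done

lemma K01_SS: "K01 \<in> SS"
proof -
  have "adj L01 = L01" by (simp add: adj_def L01_def vec_eq_iff all3)
  moreover have "trace L01 = 0" by (simp add: trace_def L01_def sum3)
  ultimately have "Lc L01 \<in> Lie" by (rule Lc_Lie)
  then show ?thesis unfolding SS_def M_L01[symmetric] by blast
qed

definition K02 :: m10 where "K02 = tbl [(S300, S201, (-3)), (S210, S111, (-2)), (S201, S300, (1)), (S201, S102, (-2)), (S120, S021, (-1)), (S111, S210, (1)), (S111, S012, (-1)), (S102, S201, (2)), (S102, S003, (-1)), (S021, S120, (1)), (S012, S111, (2)), (S003, S102, (3))]"

lemma M_L02: "M (Lc L02) = K02"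
  unfolding K02_def
  apply (rule ext)+
  subgoal for a b
    by (cases a; cases b) (simp_all add: M_orb Lc_def Cl_def csmul_def kron3_def L02_def tbl_def mat_def)
  done

lemma K02_SS: "K02 \<in> SS"
proof -
  have "adj L02 = L02" by (simp add: adj_def L02_def vec_eq_iff all3)
  moreover have "trace L02 = 0" by (simp add: trace_def L02_def sum3)
  ultimately have "Lc L02 \<in> Lie" by (rule Lc_Lie)
  then show ?thesis unfolding SS_def M_L02[symmetric] by blast
qed

definition K12 :: m10 where "K12 = tbl [(S210, S201, (-1)), (S201, S210, (1)), (S120, S111, (-2)), (S111, S120, (1)), (S111, S102, (-1)), (S102, S111, (2)), (S030, S021, (-3)), (S021, S030, (1)), (S021, S012, (-2)), (S012, S021, (2)), (S012, S003, (-1)), (S003, S012, (3))]"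

lemma M_L12: "M (Lc L12) = K12"
  unfolding K12_def
  apply (rule ext)+
  subgoal for a b
    by (cases a; cases b) (simp_all add: M_orb Lc_def Cl_def csmul_def kron3_def L12_def tbl_def mat_def)
  done

lemma K12_SS: "K12 \<in> SS"
proof -
  have "adj L12 = L12" by (simp add: adj_def L12_def vec_eq_iff all3)
  moreover have "trace L12 = 0" by (simp add: trace_def L12_def sum3)
  ultimately have "Lc L12 \<in> Lie" by (rule Lc_Lie)
  then show ?thesis unfolding SS_def M_L12[symmetric] by blast
qed

lemma seed0_eq: "br (dg (fac (1/2) (1/2))) (br (dg (fac (1/2) (-1))) (br (dg (fac (1/2) (0))) (br (dg (fac (1/2) (1))) (K01)))) = rs (2) (A S201 S111)"
  unfolding br_dg
  apply (rule ext)+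
  subgoal for a b
    by (cases a; cases b) (simp_all add: fac_def K01_def tbl_def A_def rs_def)
  done

lemma seed0: "A S201 S111 \<in> SS"
proof -
  have "br (dg (fac (1/2) (1/2))) (br (dg (fac (1/2) (-1))) (br (dg (fac (1/2) (0))) (br (dg (fac (1/2) (1))) (K01)))) \<in> SS" by (intro SS_br dg_fac_SS K01_SS)
  then have "rs (2) (A S201 S111) \<in> SS" by (simp only: seed0_eq)
  then show ?thesis by (rule SS_scale_inv) simp
qed

lemma seed1_eq: "br (dg (fac (1/2) (-1/2))) (br (dg (fac (1/2) (-1))) (br (dg (fac (1/2) (0))) (br (dg (fac (1/2) (1))) (K01)))) = rs (2) (A S111 S021)"
  unfolding br_dg
  apply (rule ext)+
  subgoal for a b
    by (cases a; cases b) (simp_all add: fac_def K01_def tbl_def A_def rs_def)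
  done

lemma seed1: "A S111 S021 \<in> SS"
proof -
  have "br (dg (fac (1/2) (-1/2))) (br (dg (fac (1/2) (-1))) (br (dg (fac (1/2) (0))) (br (dg (fac (1/2) (1))) (K01)))) \<in> SS" by (intro SS_br dg_fac_SS K01_SS)
  then have "rs (2) (A S111 S021) \<in> SS" by (simp only: seed1_eq)
  then show ?thesis by (rule SS_scale_inv) simp
qed

lemma seed2_eq: "br (dg (fac (1) (-1))) (br (dg (fac (1) (2))) (br (dg (fac (1) (0))) (br (dg (fac (1) (-2))) (K02)))) = rs (2) (A S111 S012)"
  unfolding br_dg
  apply (rule ext)+
  subgoal for a b
    by (cases a; cases b) (simp_all add: fac_def K02_def tbl_def A_def rs_def)
  done

lemma seed2: "A S111 S012 \<in> SS"
proof -
  have "br (dg (fac (1) (-1))) (br (dg (fac (1) (2))) (br (dg (fac (1) (0))) (br (dg (fac (1) (-2))) (K02)))) \<in> SS" by (intro SS_br dg_fac_SS K02_SS)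
  then have "rs (2) (A S111 S012) \<in> SS" by (simp only: seed2_eq)
  then show ?thesis by (rule SS_scale_inv) simp
qed

lemma seed3_eq: "br (dg (fac (-1) (-1))) (br (dg (fac (-1) (-2))) (br (dg (fac (-1) (0))) (br (dg (fac (-1) (2))) (K12)))) = rs (2) (A S111 S102)"
  unfolding br_dg
  apply (rule ext)+
  subgoal for a b
    by (cases a; cases b) (simp_all add: fac_def K12_def tbl_def A_def rs_def)
  done

lemma seed3: "A S111 S102 \<in> SS"
proof -
  have "br (dg (fac (-1) (-1))) (br (dg (fac (-1) (-2))) (br (dg (fac (-1) (0))) (br (dg (fac (-1) (2))) (K12)))) \<in> SS" by (intro SS_br dg_fac_SS K12_SS)
  then have "rs (2) (A S111 S102) \<in> SS" by (simp only: seed3_eq)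
  then show ?thesis by (rule SS_scale_inv) simp
qed

lemma seed4_eq: "br (dg (fac (-1) (-1))) (br (dg (fac (-1) (1))) (br (dg (fac (-1) (-2))) (br (dg (fac (-1) (0))) (K12)))) = rs (-8) (A S210 S201)"
  unfolding br_dg
  apply (rule ext)+
  subgoal for a b
    by (cases a; cases b) (simp_all add: fac_def K12_def tbl_def A_def rs_def)
  done

lemma seed4: "A S210 S201 \<in> SS"
proof -
  have "br (dg (fac (-1) (-1))) (br (dg (fac (-1) (1))) (br (dg (fac (-1) (-2))) (br (dg (fac (-1) (0))) (K12)))) \<in> SS" by (intro SS_br dg_fac_SS K12_SS)
  then have "rs (-8) (A S210 S201) \<in> SS" by (simp only: seed4_eq)
  then show ?thesis by (rule SS_scale_inv) simp
qed

lemma seed5_eq: "br (dg (fac (1) (1))) (br (dg (fac (1) (-1))) (br (dg (fac (1) (2))) (br (dg (fac (1) (0))) (K02)))) = rs (-24) (A S300 S201)"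
  unfolding br_dg
  apply (rule ext)+
  subgoal for a b
    by (cases a; cases b) (simp_all add: fac_def K02_def tbl_def A_def rs_def)
  done

lemma seed5: "A S300 S201 \<in> SS"
proof -
  have "br (dg (fac (1) (1))) (br (dg (fac (1) (-1))) (br (dg (fac (1) (2))) (br (dg (fac (1) (0))) (K02)))) \<in> SS" by (intro SS_br dg_fac_SS K02_SS)
  then have "rs (-24) (A S300 S201) \<in> SS" by (simp only: seed5_eq)
  then show ?thesis by (rule SS_scale_inv) simp
qed

lemma seed6_eq: "br (dg (fac (1) (1))) (br (dg (fac (1) (-1))) (br (dg (fac (1) (0))) (br (dg (fac (1) (-2))) (K02)))) = rs (-8) (A S120 S021)"
  unfolding br_dg
  apply (rule ext)+
  subgoal for a b
    by (cases a; cases b) (simp_all add: fac_def K02_def tbl_def A_def rs_def)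
  done

lemma seed6: "A S120 S021 \<in> SS"
proof -
  have "br (dg (fac (1) (1))) (br (dg (fac (1) (-1))) (br (dg (fac (1) (0))) (br (dg (fac (1) (-2))) (K02)))) \<in> SS" by (intro SS_br dg_fac_SS K02_SS)
  then have "rs (-8) (A S120 S021) \<in> SS" by (simp only: seed6_eq)
  then show ?thesis by (rule SS_scale_inv) simp
qed

lemma seed7_eq: "br (dg (fac (-1) (-1))) (br (dg (fac (-1) (1))) (br (dg (fac (-1) (0))) (br (dg (fac (-1) (2))) (K12)))) = rs (-24) (A S030 S021)"
  unfolding br_dg
  apply (rule ext)+
  subgoal for a b
    by (cases a; cases b) (simp_all add: fac_def K12_def tbl_def A_def rs_def)
  done

lemma seed7: "A S030 S021 \<in> SS"
proof -
  have "br (dg (fac (-1) (-1))) (br (dg (fac (-1) (1))) (br (dg (fac (-1) (0))) (br (dg (fac (-1) (2))) (K12)))) \<in> SS" by (intro SS_br dg_fac_SS K12_SS)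
  then have "rs (-24) (A S030 S021) \<in> SS" by (simp only: seed7_eq)
  then show ?thesis by (rule SS_scale_inv) simp
qed

lemma seed8_eq: "br (dg (fac (1) (1))) (br (dg (fac (1) (2))) (br (dg (fac (1) (0))) (br (dg (fac (1) (-2))) (K02)))) = rs (4) (A S201 S102)"
  unfolding br_dg
  apply (rule ext)+
  subgoal for a b
    by (cases a; cases b) (simp_all add: fac_def K02_def tbl_def A_def rs_def)
  done

lemma seed8: "A S201 S102 \<in> SS"
proof -
  have "br (dg (fac (1) (1))) (br (dg (fac (1) (2))) (br (dg (fac (1) (0))) (br (dg (fac (1) (-2))) (K02)))) \<in> SS" by (intro SS_br dg_fac_SS K02_SS)
  then have "rs (4) (A S201 S102) \<in> SS" by (simp only: seed8_eq)
  then show ?thesis by (rule SS_scale_inv) simp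
qed

lemma pair_eq: "br (A S201 S102) (br (dg (fac (1) (1))) (br (dg (fac (1) (-1))) (br (dg (fac (1) (2))) (br (dg (fac (1) (-2))) (K02))))) = rs (-12) (A S201 S003)"
  unfolding br_dg
  apply (rule ext)+
  subgoal for a b
    apply (simp only: br_def mmA_l mmA_r)
    by (cases a; cases b) (simp_all add: fac_def K02_def tbl_def A_def rs_def)
  done

lemma pair: "A S201 S003 \<in> SS"
proof -
  have "br (A S201 S102) (br (dg (fac (1) (1))) (br (dg (fac (1) (-1))) (br (dg (fac (1) (2))) (br (dg (fac (1) (-2))) (K02))))) \<in> SS" by (intro SS_br dg_fac_SS K02_SS seed8)
  then have "rs (-12) (A S201 S003) \<in> SS" by (simp only: pair_eq)
  then show ?thesis by (rule SS_scale_inv) simp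
qed

lemma A_swap_SS: "A x y \<in> SS \<Longrightarrow> A y x \<in> SS"
  unfolding A_swap[of y x] by (rule SS_rs)

lemma A_chain: "A x y \<in> SS \<Longrightarrow> A y z \<in> SS \<Longrightarrow> x \<noteq> y \<Longrightarrow> y \<noteq> z \<Longrightarrow> x \<noteq> z \<Longrightarrow> A x z \<in> SS"
proof -
  assume h: "A x y \<in> SS" "A y z \<in> SS" "x \<noteq> y" "y \<noteq> z" "x \<noteq> z"
  have "br (A x y) (A y z) \<in> SS" using h(1,2) by (rule SS_br)
  then have "rs (m y) (A x z) \<in> SS" using L1[OF h(3,4,5)] by simp
  then show ?thesis by (rule SS_scale_inv) (use m_pos[of y] in simp)
qed

lemma Astar: "x \<noteq> S111 \<Longrightarrow> A S111 x \<in> SS"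
proof -
  have a201: "A S111 S201 \<in> SS" using seed0 by (rule A_swap_SS)
  have a021: "A S111 S021 \<in> SS" by (rule seed1)
  assume "x \<noteq> S111"
  then show ?thesis
  proof (cases x)
    case S300 then show ?thesis using A_chain[OF a201 A_swap_SS[OF seed5]] by simp
  next
    case S210 then show ?thesis using A_chain[OF a201 A_swap_SS[OF seed4]] by simp
  next
    case S201 then show ?thesis using a201 by simp
  next
    case S120 then show ?thesis using A_chain[OF a021 A_swap_SS[OF seed6]] by simp
  next
    case S111 then show ?thesis using \<open>x \<noteq> S111\<close> by simp
  next
    case S102 then show ?thesis using seed3 by simp
  next
    case S030 then show ?thesis using A_chain[OF a021 A_swap_SS[OF seed7]] by simp
  next
    case S021 then show ?thesis using a021 by simp
  next
    case S012 then show ?thesis using seed2 by simp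
  next
    case S003 then show ?thesis using A_chain[OF a201 pair] by simp
  qed
qed

lemma A_all: "x \<noteq> y \<Longrightarrow> A x y \<in> SS"
proof -
  assume xy: "x \<noteq> y"
  show ?thesis
  proof (cases "x = S111")
    case True then show ?thesis using Astar xy by simp
  next
    case xn: False
    show ?thesis
    proof (cases "y = S111")
      case True then show ?thesis using A_swap_SS[OF Astar[OF xn]] by simp
    next
      case False
      then show ?thesis using A_chain[OF A_swap_SS[OF Astar[OF xn]] Astar[OF False]] xn xy by simp
    qed
  qed
qed

lemma br_dg_A: "x \<noteq> y \<Longrightarrow> br (dg f) (A x y) = rs (f x - f y) (B x y)"
proof (intro ext)
  fix i j assume xy: "x \<noteq> y"
  consider "i = x \<and> j = y" | "i = y \<and> j = x" | "\<not> (i = x \<and> j = y) \<and> \<not> (i = y \<and> j = x)" by blast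
  then show "br (dg f) (A x y) i j = rs (f x - f y) (B x y) i j"
  proof cases
    case 1 then show ?thesis using xy by (simp add: br_dg A_def B_def rs_def of_real_diff algebra_simps)
  next
    case 2 then show ?thesis using xy by (simp add: br_dg A_def B_def rs_def of_real_diff algebra_simps)
  next
    case 3
    then have "A x y i j = 0" "B x y i j = 0" unfolding A_def B_def by (simp_all only: if_False) simp_all
    then show ?thesis by (simp add: br_dg rs_def)
  qed
qed

lemma B0: "B S111 S201 \<in> SS"
proof -
  have "br (dg l1) (A S111 S201) \<in> SS" by (intro SS_br dg_l1_SS A_all) simp
  then have "rs (-2) (B S111 S201) \<in> SS" by (simp add: br_dg_A)
  then show ?thesis by (rule SS_scale_inv) simp
qed

lemma D_from: "x \<noteq> y \<Longrightarrow> B x y \<in> SS \<Longrightarrow> D x y \<in> SS"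
proof -
  assume h: "x \<noteq> y" "B x y \<in> SS"
  have "br (A x y) (B x y) \<in> SS" using A_all[OF h(1)] h(2) by (rule SS_br)
  then have "rs (2 * m x * m y) (D x y) \<in> SS" using L2[OF h(1)] by simp
  then show ?thesis by (rule SS_scale_inv) (use m_pos[of x] m_pos[of y] in simp)
qed

lemma B_from: "x \<noteq> y \<Longrightarrow> y \<noteq> z \<Longrightarrow> x \<noteq> z \<Longrightarrow> D x y \<in> SS \<Longrightarrow> B y z \<in> SS"
proof -
  assume h: "x \<noteq> y" "y \<noteq> z" "x \<noteq> z" "D x y \<in> SS"
  have "br (D x y) (A y z) \<in> SS" using h(4) A_all[OF h(2)] by (rule SS_br)
  then have "rs (-1) (B y z) \<in> SS" using L3[OF h(1,2,3)] by simp
  then show ?thesis by (rule SS_scale_inv) simp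
qed

lemma B_x0: "y \<noteq> S201 \<Longrightarrow> B S201 y \<in> SS"
proof -
  assume y: "y \<noteq> S201"
  have D0: "D S111 S201 \<in> SS" by (rule D_from[OF _ B0]) simp
  show ?thesis
  proof (cases "y = S111")
    case True then show ?thesis using B0 B_swap[of S111 S201] by simp
  next
    case False then show ?thesis using B_from[OF _ _ _ D0] y by simp
  qed
qed

lemma D_x0: "y \<noteq> S201 \<Longrightarrow> D S201 y \<in> SS"
proof -
  assume y: "y \<noteq> S201"
  then have "S201 \<noteq> y" by simp
  then show ?thesis by (rule D_from[OF _ B_x0[OF y]])
qed

lemma B_all: "x \<noteq> y \<Longrightarrow> B x y \<in> SS"
proof -
  assume xy: "x \<noteq> y"
  show ?thesis
  proof (cases "x = S201")
    case True then show ?thesis using B_x0 xy by simp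
  next
    case xn: False
    show ?thesis
    proof (cases "y = S201")
      case True then show ?thesis using B_x0[OF xn] B_swap[of x y] by simp
    next
      case False
      then show ?thesis using B_from[OF _ _ _ D_x0[OF xn]] xn xy by simp
    qed
  qed
qed

definition Tm :: "m10 \<Rightarrow> bool" where
  "Tm x = ((\<forall>a b. complex_of_real (m a) * x a b = - (complex_of_real (m b) * cnj (x b a))) \<and> (\<Sum>a\<in>UNIV. x a a) = 0)"

lemma m_nz: "complex_of_real (m a) \<noteq> 0"
  using m_pos[of a] by simp

lemma diag_re: "Tm x \<Longrightarrow> Re (x a a) = 0"
proof -
  assume "Tm x"
  then have e: "complex_of_real (m a) * x a a = - (complex_of_real (m a) * cnj (x a a))" by (simp add: Tm_def)
  then have "complex_of_real (m a) * (x a a + cnj (x a a)) = 0" by (simp add: algebra_simps)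
  then have "x a a + cnj (x a a) = 0" using m_nz[of a] by simp
  then have "complex_of_real (2 * Re (x a a)) = 0" by (simp only: complex_add_cnj)
  then show ?thesis by simp
qed

lemma diag_eq: "Tm x \<Longrightarrow> x a a = \<i> * complex_of_real (Im (x a a))"
  using complex_eq[of "x a a"] diag_re[of x a] by simp

lemma im_sum: "Tm x \<Longrightarrow> (\<Sum>a\<in>UNIV. Im (x a a)) = 0"
proof -
  assume "Tm x"
  then have "(\<Sum>a\<in>UNIV. x a a) = 0" by (simp add: Tm_def)
  then have "Im (\<Sum>a\<in>UNIV. x a a) = 0" by simp
  then show ?thesis by simp
qed

definition W :: "m10 \<Rightarrow> st \<Rightarrow> st \<Rightarrow> m10" where
  "W x a b = (\<lambda>i j. if (i = a \<and> j = b) \<or> (i = b \<and> j = a) then x i j else 0)"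

lemma W_SS: "Tm x \<Longrightarrow> a \<noteq> b \<Longrightarrow> W x a b \<in> SS"
proof -
  assume T: "Tm x" and ab: "a \<noteq> b"
  define c where "c = x a b / complex_of_real (m b)"
  define r where "r = Re c"
  define s where "s = Im c"
  have c: "c = complex_of_real r + \<i> * complex_of_real s"
    unfolding r_def s_def by (rule complex_eq)
  have xab: "x a b = complex_of_real (m b) * (complex_of_real r + \<i> * complex_of_real s)"
    using m_nz[of b] c unfolding c_def by (simp add: field_simps)
  have "complex_of_real (m b) * x b a = - (complex_of_real (m a) * cnj (x a b))"
    using T by (simp add: Tm_def)
  also have "cnj (x a b) = complex_of_real (m b) * (complex_of_real r - \<i> * complex_of_real s)"
    by (simp add: xab)
  finally have "complex_of_real (m b) * x b a = complex_of_real (m b) * (- (complex_of_real (m a) * (complex_of_real r - \<i> * complex_of_real s)))"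
    by (simp add: algebra_simps)
  then have xba: "x b a = - (complex_of_real (m a) * (complex_of_real r - \<i> * complex_of_real s))"
    by (simp only: mult_left_cancel[OF m_nz[of b]])
  have "W x a b = pl (rs r (A a b)) (rs s (B a b))"
  proof (intro ext)
    fix i j
    consider "i = a \<and> j = b" | "i = b \<and> j = a" | "\<not> (i = a \<and> j = b) \<and> \<not> (i = b \<and> j = a)" by blast
    then show "W x a b i j = pl (rs r (A a b)) (rs s (B a b)) i j"
    proof cases
      case 1 then show ?thesis using ab xab by (simp add: W_def pl_def rs_def A_def B_def algebra_simps)
    next
      case 2 then show ?thesis using ab xba by (simp add: W_def pl_def rs_def A_def B_def algebra_simps)
    next
      case 3
      then have "A a b i j = 0" "B a b i j = 0" "W x a b i j = 0" unfolding A_def B_def W_def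
        by (simp_all only: if_False) simp_all
      then show ?thesis by (simp add: pl_def rs_def)
    qed
  qed
  moreover have "pl (rs r (A a b)) (rs s (B a b)) \<in> SS"
    by (intro SS_pl SS_rs A_all B_all ab)
  ultimately show ?thesis by simp
qed

definition W' :: "m10 \<Rightarrow> st \<times> st \<Rightarrow> m10" where
  "W' x p = (if fst p \<noteq> snd p then W x (fst p) (snd p) else (\<lambda>i j. 0))"

lemma W'_SS: "Tm x \<Longrightarrow> W' x p \<in> SS"
  unfolding W'_def using W_SS SS_zero by auto

lemma SW_val: "(\<Sum>p\<in>UNIV. W' x p i j) = (if i = j then 0 else 2 * x i j)"
proof (cases "i = j")
  case True
  have "W' x p i j = 0" for p using True by (auto simp: W'_def W_def)
  then show ?thesis using True by simp
next
  case False
  have "W' x p i j = (if p \<in> {(i,j),(j,i)} then x i j else 0)" for p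
    using False by (cases p) (auto simp: W'_def W_def)
  then have "(\<Sum>p\<in>UNIV. W' x p i j) = (\<Sum>p\<in>UNIV. if p \<in> {(i,j),(j,i)} then x i j else 0)" by simp
  also have "\<dots> = (\<Sum>p\<in>{(i,j),(j,i)}. x i j)"
  proof -
    have "{p. p = (i,j) \<or> p = (j,i)} = {(i,j),(j,i)}" by auto
    then show ?thesis by (subst sum.If_cases) simp_all
  qed
  also have "\<dots> = 2 * x i j" using False by simp
  finally show ?thesis using False by simp
qed

lemma DD_val:
  assumes T: "Tm x"
  shows "(\<Sum>y\<in>UNIV - {S201}. rs (- Im (x y y)) (D S201 y) i j) = (if i = j then x i i else 0)"
proof (cases "i = j")
  case False
  have "rs (- Im (x y y)) (D S201 y) i j = 0" for y using False by (auto simp: rs_def D_def)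
  then show ?thesis using False by simp
next
  case True
  have e: "rs (- Im (x y y)) (D S201 y) i i = - complex_of_real (Im (x y y)) * \<i> * (if i = S201 then 1 else 0)
     + complex_of_real (Im (x y y)) * \<i> * (if i = y then 1 else 0)" for y
    by (simp add: rs_def D_def algebra_simps)
  have s1: "(\<Sum>y\<in>UNIV - {S201}. Im (x y y)) = - Im (x S201 S201)"
    using im_sum[OF T] sum.remove[of UNIV S201 "\<lambda>y. Im (x y y)"] by simp
  have "(\<Sum>y\<in>UNIV - {S201}. rs (- Im (x y y)) (D S201 y) i i)
      = - complex_of_real (\<Sum>y\<in>UNIV - {S201}. Im (x y y)) * \<i> * (if i = S201 then 1 else 0)
        + (\<Sum>y\<in>UNIV - {S201}. complex_of_real (Im (x y y)) * \<i> * (if i = y then 1 else 0))"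
    by (simp add: e sum.distrib sum_distrib_right sum_negf)
  also have "(\<Sum>y\<in>UNIV - {S201}. complex_of_real (Im (x y y)) * \<i> * (if i = y then 1 else 0))
      = (if i = S201 then 0 else complex_of_real (Im (x i i)) * \<i>)"
    by (simp add: if01 sum.delta')
  finally have "(\<Sum>y\<in>UNIV - {S201}. rs (- Im (x y y)) (D S201 y) i i)
      = complex_of_real (Im (x S201 S201)) * \<i> * (if i = S201 then 1 else 0)
        + (if i = S201 then 0 else complex_of_real (Im (x i i)) * \<i>)"
    using s1 by simp
  also have "\<dots> = x i i"
    using diag_eq[OF T, of i] by (cases "i = S201") (simp_all add: mult.commute)
  finally show ?thesis using True by simp
qed

lemma T_SS: "Tm x \<Longrightarrow> x \<in> SS"
proof -
  assume T: "Tm x"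
  have SW: "(\<lambda>i j. \<Sum>p\<in>UNIV. W' x p i j) \<in> SS"
    by (rule SS_sum) (auto intro: W'_SS[OF T])
  have DD: "(\<lambda>i j. \<Sum>y\<in>UNIV - {S201}. rs (- Im (x y y)) (D S201 y) i j) \<in> SS"
    by (rule SS_sum) (auto intro!: SS_rs D_x0)
  have "pl (rs (1/2) (\<lambda>i j. \<Sum>p\<in>UNIV. W' x p i j)) (\<lambda>i j. \<Sum>y\<in>UNIV - {S201}. rs (- Im (x y y)) (D S201 y) i j) \<in> SS"
    by (intro SS_pl SS_rs SW DD)
  moreover have "pl (rs (1/2) (\<lambda>i j. \<Sum>p\<in>UNIV. W' x p i j)) (\<lambda>i j. \<Sum>y\<in>UNIV - {S201}. rs (- Im (x y y)) (D S201 y) i j) = x"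
    by (simp add: fun_eq_iff pl_def rs_def[of "1/2"] SW_val DD_val[OF T])
  ultimately show ?thesis by simp
qed

lemma card_orb: "(\<Sum>t\<in>UNIV. if tau t = a then (1::complex) else 0) = complex_of_real (m a)"
  by (simp add: sum_tau) (cases a, simp_all)

lemma cnj_if01: "cnj (if P then 1 else 0) = (if P then 1 else 0)" by simp
lemma if1m: "(if P then 1 else 0) * (y::'a::semiring_1) = (if P then y else 0)" by simp

lemma cinner_u: "w \<in> Sym \<Longrightarrow> cinner (u a) w = complex_of_real (m a) * w $ rep a"
proof -
  assume w: "w \<in> Sym"
  have "cinner (u a) w = (\<Sum>t\<in>UNIV. if tau t = a then w $ t else 0)"
    by (simp add: cinner_def u_def if1m cnj_if01)
  also have "\<dots> = (\<Sum>t\<in>UNIV. if tau t = a then w $ rep a else 0)"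
  proof (rule sum.cong[OF refl])
    fix t
    show "(if tau t = a then w $ t else 0) = (if tau t = a then w $ rep a else 0)"
      using Sym_rep[OF w, of t] by auto
  qed
  also have "\<dots> = (\<Sum>t\<in>UNIV. w $ rep a * (if tau t = a then 1 else 0))"
    by (simp add: if01)
  also have "\<dots> = w $ rep a * complex_of_real (m a)"
    by (simp add: sum_distrib_left[symmetric] card_orb)
  finally show ?thesis by simp
qed

lemma cinner_adj: "cinner v (Q *v w) = cinner (adj Q *v v) w"
proof -
  have "cinner v (Q *v w) = (\<Sum>i\<in>UNIV. \<Sum>j\<in>UNIV. cnj (v $ i) * Q $ i $ j * w $ j)"
    by (simp add: cinner_def matrix_vector_mult_def sum_distrib_left mult.assoc)
  also have "\<dots> = (\<Sum>j\<in>UNIV. \<Sum>i\<in>UNIV. cnj (v $ i) * Q $ i $ j * w $ j)"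
    by (rule sum.swap)
  also have "\<dots> = (\<Sum>j\<in>UNIV. (\<Sum>i\<in>UNIV. Q $ i $ j * cnj (v $ i)) * w $ j)"
    by (rule sum.cong[OF refl]) (simp add: sum_distrib_right sum_distrib_left mult_ac)
  also have "\<dots> = cinner (adj Q *v v) w"
    by (simp add: cinner_def matrix_vector_mult_def adj_def)
  finally show ?thesis .
qed

lemma cinner_diff: "cinner w (v1 - v2) = cinner w v1 - cinner w v2"
  by (simp add: cinner_def right_diff_distrib sum_subtractf)

lemma cinner_swap: "cinner v w = cnj (cinner w v)"
  by (simp add: cinner_def mult.commute)

lemma cinner_neg: "cinner (- v) w = - cinner v w"
  by (simp add: cinner_def sum_negf)

lemma mv_neg: "(- (X::op27)) *v v = - (X *v v)"
proof (rule vec_eq_iff[THEN iffD2], rule allI)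
  fix i
  have "((- X) *v v) $ i = (\<Sum>j\<in>UNIV. - (X $ i $ j * v $ j))" by (simp add: matrix_vector_mult_def mult_minus_left)
  also have "\<dots> = - (\<Sum>j\<in>UNIV. X $ i $ j * v $ j)" by (rule sum_negf)
  also have "\<dots> = (- (X *v v)) $ i" by (simp add: matrix_vector_mult_def)
  finally show "((- X) *v v) $ i = (- (X *v v)) $ i" .
qed

lemma MX_skew:
  assumes h1: "\<forall>v\<in>Sym. X *v v \<in> Sym" and h3: "adj X = - X"
  shows "complex_of_real (m a) * M X a b = - (complex_of_real (m b) * cnj (M X b a))"
proof -
  have "complex_of_real (m a) * M X a b = cinner (u a) (X *v u b)"
    using cinner_u[of "X *v u b" a] h1 u_Sym by (simp add: M_def)
  also have "\<dots> = cinner (adj X *v u a) (u b)" by (rule cinner_adj)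
  also have "\<dots> = - cinner (X *v u a) (u b)" by (simp add: h3 mv_neg cinner_neg)
  also have "\<dots> = - cnj (cinner (u b) (X *v u a))" by (simp add: cinner_swap[of "X *v u a"])
  also have "cinner (u b) (X *v u a) = complex_of_real (m b) * M X b a"
    using cinner_u[of "X *v u a" b] h1 u_Sym by (simp add: M_def)
  finally show ?thesis by simp
qed

lemma group_tau: "(\<Sum>t\<in>UNIV. g (tau t)) = (\<Sum>a\<in>UNIV. complex_of_real (m a) * g a)"
proof -
  have "(\<Sum>t\<in>UNIV. g (tau t)) = (\<Sum>t\<in>UNIV. \<Sum>a\<in>UNIV. if tau t = a then g a else 0)"
    by (simp add: sum.delta')
  also have "\<dots> = (\<Sum>a\<in>UNIV. \<Sum>t\<in>UNIV. if tau t = a then g a else 0)" by (rule sum.swap)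
  also have "\<dots> = (\<Sum>a\<in>UNIV. g a * (\<Sum>t\<in>UNIV. if tau t = a then 1 else 0))"
    by (simp add: sum_distrib_left if01)
  also have "\<dots> = (\<Sum>a\<in>UNIV. complex_of_real (m a) * g a)"
    by (simp add: card_orb mult.commute)
  finally show ?thesis .
qed

lemma MX_trace:
  assumes h1: "\<forall>v\<in>Sym. X *v v \<in> Sym"
    and h2: "\<forall>v. (\<forall>w\<in>Sym. cinner w v = 0) \<longrightarrow> X *v v = 0"
  shows "trace X = (\<Sum>a\<in>UNIV. M X a a)"
proof -
  have diag: "X $ t $ t = M X (tau t) (tau t) / complex_of_real (m (tau t))" for t
  proof -
    define e :: vec27 where "e = axis t 1"
    define k where "k = 1 / complex_of_real (m (tau t))"
    define v where "v = e - k *s u (tau t)"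
    have "cinner w v = 0" if w: "w \<in> Sym" for w
    proof -
      have "cinner w e = cnj (w $ t)"
        by (simp add: cinner_def e_def axis_def mult_if0 sum.delta)
      moreover have "cinner w (k *s u (tau t)) = k * cinner w (u (tau t))"
        by (simp add: cinner_def sum_distrib_left mult_ac)
      moreover have "cinner w (u (tau t)) = cnj (cinner (u (tau t)) w)"
        by (rule cinner_swap)
      moreover have "cinner (u (tau t)) w = complex_of_real (m (tau t)) * w $ t"
        using cinner_u[OF w] Sym_rep[OF w, of t] by simp
      ultimately have "cinner w v = cnj (w $ t) - k * cnj (complex_of_real (m (tau t)) * w $ t)"
        by (simp add: v_def cinner_diff)
      also have "\<dots> = 0" using m_nz[of "tau t"] by (simp add: k_def)
      finally show ?thesis .
    qed
    then have "X *v v = 0" using h2 by blast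
    then have "X *v e = k *s (X *v u (tau t))"
      by (simp add: v_def vec_eq_iff matrix_vector_mult_def right_diff_distrib sum_subtractf sum_distrib_left mult_ac)
    then have "X $ t $ t = k * (X *v u (tau t)) $ t"
      by (simp add: vec_eq_iff e_def matrix_vector_mult_def axis_def mult_if0 sum.delta)
    also have "(X *v u (tau t)) $ t = M X (tau t) (tau t)"
      using Sym_rep[of "X *v u (tau t)" t] h1 u_Sym by (simp add: M_def)
    finally show ?thesis by (simp add: k_def)
  qed
  have "trace X = (\<Sum>t\<in>UNIV. M X (tau t) (tau t) / complex_of_real (m (tau t)))"
    by (simp add: trace_def diag)
  also have "\<dots> = (\<Sum>a\<in>UNIV. complex_of_real (m a) * (M X a a / complex_of_real (m a)))"
    by (rule group_tau)
  also have "\<dots> = (\<Sum>a\<in>UNIV. M X a a)"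
    using m_nz by simp
  finally show ?thesis .
qed

lemma mv_decomp: "Q *v (\<Sum>b\<in>UNIV. c b *s u b) = (\<Sum>b\<in>UNIV. c b *s (Q *v u b))"
proof (rule vec_eq_iff[THEN iffD2], rule allI)
  fix i
  have "(Q *v (\<Sum>b\<in>UNIV. c b *s u b)) $ i = (\<Sum>j\<in>UNIV. \<Sum>b\<in>UNIV. Q $ i $ j * (c b * u b $ j))"
    by (simp add: matrix_vector_mult_def sum_distrib_left)
  also have "\<dots> = (\<Sum>b\<in>UNIV. \<Sum>j\<in>UNIV. Q $ i $ j * (c b * u b $ j))" by (rule sum.swap)
  also have "\<dots> = (\<Sum>b\<in>UNIV. c b *s (Q *v u b)) $ i"
    by (simp add: matrix_vector_mult_def sum_distrib_left mult_ac)
  finally show "(Q *v (\<Sum>b\<in>UNIV. c b *s u b)) $ i = (\<Sum>b\<in>UNIV. c b *s (Q *v u b)) $ i" .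
qed

theorem proposition6p2:
  fixes X :: op27
  assumes "\<forall>v\<in>Sym. X *v v \<in> Sym"
    and "\<forall>v. (\<forall>w\<in>Sym. cinner w v = 0) \<longrightarrow> X *v v = 0"
    and "adj X = - X"
    and "trace X = 0"
  shows "\<exists>Y\<in>Lie. \<forall>v\<in>Sym. Y *v v = X *v v"
proof -
  have "Tm (M X)"
    unfolding Tm_def using MX_skew[OF assms(1,3)] MX_trace[OF assms(1,2)] assms(4) by simp
  then have "M X \<in> SS" by (rule T_SS)
  then obtain Y where Y: "Y \<in> Lie" "M Y = M X" unfolding SS_def by auto
  have ub: "Y *v u b = X *v u b" for b
  proof -
    have s1: "Y *v u b \<in> Sym" by (rule Inv_Sym[OF Lie_Inv[OF Y(1)] u_Sym])
    have s2: "X *v u b \<in> Sym" using assms(1) u_Sym by blast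
    show ?thesis
    proof (rule vec_eq_iff[THEN iffD2], rule allI)
      fix t
      have "(Y *v u b) $ t = M Y (tau t) b" using Sym_rep[OF s1, of t] by (simp add: M_def)
      also have "\<dots> = M X (tau t) b" using Y(2) by simp
      also have "\<dots> = (X *v u b) $ t" using Sym_rep[OF s2, of t] by (simp add: M_def)
      finally show "(Y *v u b) $ t = (X *v u b) $ t" .
    qed
  qed
  have "\<forall>v\<in>Sym. Y *v v = X *v v"
  proof
    fix v assume v: "v \<in> Sym"
    have "Y *v v = Y *v (\<Sum>b\<in>UNIV. v $ rep b *s u b)" using Sym_decomp[OF v] by simp
    also have "\<dots> = (\<Sum>b\<in>UNIV. v $ rep b *s (X *v u b))" by (simp add: mv_decomp ub)
    also have "\<dots> = X *v (\<Sum>b\<in>UNIV. v $ rep b *s u b)" by (simp add: mv_decomp)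
    also have "\<dots> = X *v v" using Sym_decomp[OF v] by simp
    finally show "Y *v v = X *v v" .
  qed
  then show ?thesis using Y(1) by blast
qed

end
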